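(* Let $K=\mathbb{F}_{q^n}$, let $\sigma$ be an automorphism of $K$ of order $n>1$ with fixed field $F=\mathbb{F}_q$, and let $f\in K[t;\sigma]$ be monic of degree $m\ge 2$, irreducible and not right-invariant, with $n\ge m-1$. Suppose the multiplicative loop $L_f$ of $S_f$ has nucleus $K^\times\cdot 1$. Then $|\{T_c\in\mathrm{Inn}(L_f)\,:\, T_c \text{ is an automorphism of } L_f\}|\ge \frac{q^n-1}{q-1}.$
   Context: $R=K[t;\sigma]$ is the twisted polynomial ring ($tb=\sigma(b)t$ for $b\in K$). $f$ is irreducible if it has no factorization into two factors of smaller degree; right-invariant if $Rf$ is a two-sided ideal. $S_f$ is the set of elements of $R$ of degree $<m$ with multiplication $g\circ h=gh\bmod_r f$ (remainder of right division by $f$), a proper semifield; $L_f=S_f\setminus\{0\}$ is its multiplicative loop. The nucleus of a loop $L$ is the set of $x$ with $(xy)z=x(yz)$, $(yx)z=y(xz)$, $(yz)x=y(zx)$ for all $y,z\in L$. For $x\in L$, $L_x(y)=xy$, $R_x(y)=yx$, and $T_x=L_x^{-1}R_x$ is the middle inner mapping; $\mathrm{Mlt}(L)$ is the group generated by all $L_x,R_x$ and $\mathrm{Inn}(L)=\{g\in\mathrm{Mlt}(L):g(1)=1\}$. *)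

theory Defs
  imports "HOL-Computational_Algebra.Polynomial" "HOL-Algebra.Generated_Groups" "HOL-Algebra.Bij"
begin

(* Twisted polynomial ring K[t;sigma], elements represented by their coefficient
   polynomials ('k poly); multiplication determined by  t b = sigma(b) t, i.e.
   (a t^i)(b t^j) = a sigma^i(b) t^(i+j). *)
definition skew_mult :: "('k::field \<Rightarrow> 'k) \<Rightarrow> 'k poly \<Rightarrow> 'k poly \<Rightarrow> 'k poly" where
  "skew_mult \<sigma> p r =
     (\<Sum>i\<le>degree p. \<Sum>j\<le>degree r. monom (coeff p i * (\<sigma> ^^ i) (coeff r j)) (i + j))"

definition skew_rmod :: "('k::field \<Rightarrow> 'k) \<Rightarrow> 'k poly \<Rightarrow> 'k poly \<Rightarrow> 'k poly" where
  "skew_rmod \<sigma> g f =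
     (THE r. degree r < degree f \<and> (\<exists>q. g = skew_mult \<sigma> q f + r))"

definition skew_irreducible :: "('k::field \<Rightarrow> 'k) \<Rightarrow> 'k poly \<Rightarrow> bool" where
  "skew_irreducible \<sigma> f \<longleftrightarrow>
     \<not> (\<exists>g h. f = skew_mult \<sigma> g h \<and> degree g < degree f \<and> degree h < degree f)"

(* R f is a two-sided ideal, i.e. f R \<subseteq> R f *)
definition right_invariant :: "('k::field \<Rightarrow> 'k) \<Rightarrow> 'k poly \<Rightarrow> bool" where
  "right_invariant \<sigma> f \<longleftrightarrow> (\<forall>g. \<exists>h. skew_mult \<sigma> f g = skew_mult \<sigma> h f)"

definition Sf_mult :: "('k::field \<Rightarrow> 'k) \<Rightarrow> 'k poly \<Rightarrow> 'k poly \<Rightarrow> 'k poly \<Rightarrow> 'k poly" where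
  "Sf_mult \<sigma> f g h = skew_rmod \<sigma> (skew_mult \<sigma> g h) f"

definition Lf :: "'k::field poly \<Rightarrow> 'k poly set" where
  "Lf f = {p. degree p < degree f \<and> p \<noteq> 0}"

definition loop_nucleus :: "'a set \<Rightarrow> ('a \<Rightarrow> 'a \<Rightarrow> 'a) \<Rightarrow> 'a set" where
  "loop_nucleus L mul = {x \<in> L. \<forall>y\<in>L. \<forall>z\<in>L.
      mul (mul x y) z = mul x (mul y z) \<and>
      mul (mul y x) z = mul y (mul x z) \<and>
      mul (mul y z) x = mul y (mul z x)}"

definition lmult_map :: "'a set \<Rightarrow> ('a \<Rightarrow> 'a \<Rightarrow> 'a) \<Rightarrow> 'a \<Rightarrow> 'a \<Rightarrow> 'a" where
  "lmult_map L mul x = (\<lambda>y\<in>L. mul x y)"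

definition rmult_map :: "'a set \<Rightarrow> ('a \<Rightarrow> 'a \<Rightarrow> 'a) \<Rightarrow> 'a \<Rightarrow> 'a \<Rightarrow> 'a" where
  "rmult_map L mul x = (\<lambda>y\<in>L. mul y x)"

definition Mlt :: "'a set \<Rightarrow> ('a \<Rightarrow> 'a \<Rightarrow> 'a) \<Rightarrow> ('a \<Rightarrow> 'a) set" where
  "Mlt L mul = generate (BijGroup L)
      ((lmult_map L mul ` L) \<union> (rmult_map L mul ` L))"

definition Inn :: "'a set \<Rightarrow> ('a \<Rightarrow> 'a \<Rightarrow> 'a) \<Rightarrow> 'a \<Rightarrow> ('a \<Rightarrow> 'a) set" where
  "Inn L mul e = {g \<in> Mlt L mul. g e = e}"

definition middle_inner :: "'a set \<Rightarrow> ('a \<Rightarrow> 'a \<Rightarrow> 'a) \<Rightarrow> 'a \<Rightarrow> 'a \<Rightarrow> 'a" where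
  "middle_inner L mul x =
     inv\<^bsub>BijGroup L\<^esub> (lmult_map L mul x) \<otimes>\<^bsub>BijGroup L\<^esub> rmult_map L mul x"

definition loop_automorphism :: "'a set \<Rightarrow> ('a \<Rightarrow> 'a \<Rightarrow> 'a) \<Rightarrow> ('a \<Rightarrow> 'a) \<Rightarrow> bool" where
  "loop_automorphism L mul \<phi> \<longleftrightarrow>
     bij_betw \<phi> L L \<and> (\<forall>x\<in>L. \<forall>y\<in>L. \<phi> (mul x y) = mul (\<phi> x) (\<phi> y))"

end

theory Submission
  imports Defs
begin

locale skewf =
  fixes \<sigma> :: "'k::field \<Rightarrow> 'k"
  assumes sadd: "\<And>x y. \<sigma> (x + y) = \<sigma> x + \<sigma> y"
    and smul: "\<And>x y. \<sigma> (x * y) = \<sigma> x * \<sigma> y"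
    and sbij: "bij \<sigma>"
begin

lemma pw_add: "(\<sigma>^^i) (x + y) = (\<sigma>^^i) x + (\<sigma>^^i) y"
  by (induction i) (auto simp: sadd)
lemma pw_mult: "(\<sigma>^^i) (x * y) = (\<sigma>^^i) x * (\<sigma>^^i) y"
  by (induction i) (auto simp: smul)
lemma s0: "\<sigma> 0 = 0"
proof -
  have "\<sigma> 0 + \<sigma> 0 = \<sigma> 0 + 0" using sadd[of 0 0] by simp
  then show ?thesis by (simp only: add_left_cancel)
qed
lemma pw_0[simp]: "(\<sigma>^^i) 0 = 0"
  by (induction i) (auto simp: s0)
lemma pw_inj: "(\<sigma>^^i) x = (\<sigma>^^i) y \<longleftrightarrow> x = y"
  using bij_fn[OF sbij, of i] by (meson bij_is_inj injD)
lemma pw_eq0[simp]: "(\<sigma>^^i) x = 0 \<longleftrightarrow> x = 0"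
  using pw_inj[of i x 0] by simp
lemma pw_1[simp]: "(\<sigma>^^i) 1 = 1"
proof -
  have "(\<sigma>^^i) 1 * (\<sigma>^^i) 1 = (\<sigma>^^i) 1 * 1" using pw_mult[of i 1 1] by simp
  moreover have "(\<sigma>^^i) 1 \<noteq> 0" by simp
  ultimately show ?thesis by (metis mult_left_cancel)
qed

abbreviation sm where "sm \<equiv> skew_mult \<sigma>"

lemma sm_bound:
  assumes "degree p \<le> N" "degree r \<le> M"
  shows "sm p r = (\<Sum>i\<le>N. \<Sum>j\<le>M. monom (coeff p i * (\<sigma>^^i) (coeff r j)) (i + j))"
proof -
  have inner: "(\<Sum>j\<le>M. monom (coeff p i * (\<sigma>^^i) (coeff r j)) (i + j))
     = (\<Sum>j\<le>degree r. monom (coeff p i * (\<sigma>^^i) (coeff r j)) (i + j))" for i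
    by (rule sum.mono_neutral_right) (use assms in \<open>auto simp: coeff_eq_0\<close>)
  have "(\<Sum>i\<le>N. \<Sum>j\<le>degree r. monom (coeff p i * (\<sigma>^^i) (coeff r j)) (i + j))
     = (\<Sum>i\<le>degree p. \<Sum>j\<le>degree r. monom (coeff p i * (\<sigma>^^i) (coeff r j)) (i + j))"
    by (rule sum.mono_neutral_right) (use assms in \<open>auto simp: coeff_eq_0\<close>)
  then show ?thesis by (simp add: inner skew_mult_def)
qed

lemma sm_add_left: "sm (p + p') r = sm p r + sm p' r"
proof -
  let ?N = "max (degree p) (degree p')"
  have d: "degree (p + p') \<le> ?N" by (rule degree_add_le) auto
  have "sm (p + p') r = (\<Sum>i\<le>?N. \<Sum>j\<le>degree r. monom (coeff (p+p') i * (\<sigma>^^i) (coeff r j)) (i + j))"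
    by (rule sm_bound[OF d order_refl])
  also have "\<dots> = (\<Sum>i\<le>?N. \<Sum>j\<le>degree r. monom (coeff p i * (\<sigma>^^i) (coeff r j)) (i + j))
     + (\<Sum>i\<le>?N. \<Sum>j\<le>degree r. monom (coeff p' i * (\<sigma>^^i) (coeff r j)) (i + j))"
    by (simp add: distrib_right add_monom[symmetric] sum.distrib)
  also have "\<dots> = sm p r + sm p' r"
    by (simp add: sm_bound[of p ?N r "degree r"] sm_bound[of p' ?N r "degree r"])
  finally show ?thesis .
qed

lemma sm_add_right: "sm p (r + r') = sm p r + sm p r'"
proof -
  let ?N = "max (degree r) (degree r')"
  have d: "degree (r + r') \<le> ?N" by (rule degree_add_le) auto
  have "sm p (r + r') = (\<Sum>i\<le>degree p. \<Sum>j\<le>?N. monom (coeff p i * (\<sigma>^^i) (coeff (r+r') j)) (i + j))"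
    by (rule sm_bound[OF order_refl d])
  also have "\<dots> = (\<Sum>i\<le>degree p. \<Sum>j\<le>?N. monom (coeff p i * (\<sigma>^^i) (coeff r j)) (i + j))
     + (\<Sum>i\<le>degree p. \<Sum>j\<le>?N. monom (coeff p i * (\<sigma>^^i) (coeff r' j)) (i + j))"
    by (simp add: pw_add distrib_left add_monom[symmetric] sum.distrib)
  also have "\<dots> = sm p r + sm p r'"
    by (simp add: sm_bound[of p "degree p" r ?N] sm_bound[of p "degree p" r' ?N])
  finally show ?thesis .
qed

lemma sm_0_left[simp]: "sm 0 r = 0" by (simp add: skew_mult_def)
lemma sm_0_right[simp]: "sm p 0 = 0" by (simp add: skew_mult_def)

lemma sm_minus_left: "sm (- p) r = - sm p r"
proof -
  have "sm p r + sm (-p) r = 0" using sm_add_left[of p "-p" r] by simp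
  then show ?thesis by (metis minus_unique)
qed
lemma sm_minus_right: "sm p (- r) = - sm p r"
proof -
  have "sm p r + sm p (-r) = 0" using sm_add_right[of p r "-r"] by simp
  then show ?thesis by (metis minus_unique)
qed
lemma sm_diff_left: "sm (p - p') r = sm p r - sm p' r"
  using sm_add_left[of p "-p'" r] by (simp add: sm_minus_left)
lemma sm_diff_right: "sm p (r - r') = sm p r - sm p r'"
  using sm_add_right[of p r "-r'"] by (simp add: sm_minus_right)

lemma sm_sum_left: "sm (\<Sum>i\<in>I. P i) r = (\<Sum>i\<in>I. sm (P i) r)"
  by (induction I rule: infinite_finite_induct) (auto simp: sm_add_left)
lemma sm_sum_right: "sm p (\<Sum>i\<in>I. P i) = (\<Sum>i\<in>I. sm p (P i))"
  by (induction I rule: infinite_finite_induct) (auto simp: sm_add_right)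

lemma sm_monom: "sm (monom a i) (monom b j) = monom (a * (\<sigma>^^i) b) (i + j)"
proof -
  have "sm (monom a i) (monom b j) =
     (\<Sum>i'\<le>i. \<Sum>j'\<le>j. monom (coeff (monom a i) i' * (\<sigma>^^i') (coeff (monom b j) j')) (i' + j'))"
    by (rule sm_bound) (auto simp: degree_monom_le)
  also have "\<dots> = (\<Sum>i'\<le>i. \<Sum>j'\<le>j. (if i' = i then (if j' = j then monom (a * (\<sigma>^^i) b) (i + j) else 0) else 0))"
    by (intro sum.cong refl) (auto simp: coeff_monom)
  also have "\<dots> = (\<Sum>i'\<le>i. (if i' = i then monom (a * (\<sigma>^^i) b) (i + j) else 0))"
    by (intro sum.cong refl) (cases "i' = i"; simp)
  also have "\<dots> = monom (a * (\<sigma>^^i) b) (i + j)"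
    by simp
  finally show ?thesis .
qed

lemma sm_assoc1: "sm (sm (monom a i) (monom b j)) s = sm (monom a i) (sm (monom b j) s)"
proof -
  have "sm (sm (monom a i) (monom b j)) (\<Sum>l\<le>degree s. monom (coeff s l) l)
      = sm (monom a i) (sm (monom b j) (\<Sum>l\<le>degree s. monom (coeff s l) l))"
    by (simp add: sm_sum_right sm_monom pw_mult funpow_add mult.assoc add.assoc)
  then show ?thesis by (simp only: poly_as_sum_of_monoms)
qed

lemma sm_assoc2: "sm (sm (monom a i) r) s = sm (monom a i) (sm r s)"
proof -
  have "sm (sm (monom a i) (\<Sum>j\<le>degree r. monom (coeff r j) j)) s
      = sm (monom a i) (sm (\<Sum>j\<le>degree r. monom (coeff r j) j) s)"
    by (simp add: sm_sum_right sm_sum_left sm_assoc1)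
  then show ?thesis by (simp only: poly_as_sum_of_monoms)
qed

lemma sm_assoc: "sm (sm p r) s = sm p (sm r s)"
proof -
  have "sm (sm (\<Sum>i\<le>degree p. monom (coeff p i) i) r) s
      = sm (\<Sum>i\<le>degree p. monom (coeff p i) i) (sm r s)"
    by (simp add: sm_sum_left sm_assoc2)
  then show ?thesis by (simp only: poly_as_sum_of_monoms)
qed

lemma sm_coeff: "coeff (sm p r) k =
   (\<Sum>i\<le>degree p. \<Sum>j\<le>degree r. if i + j = k then coeff p i * (\<sigma>^^i) (coeff r j) else 0)"
  by (simp add: skew_mult_def coeff_sum coeff_monom)

lemma sm_high: "k > degree p + degree r \<Longrightarrow> coeff (sm p r) k = 0"
  unfolding sm_coeff by (intro sum.neutral ballI) auto

lemma sm_degree_le: "degree (sm p r) \<le> degree p + degree r"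
  by (rule degree_le) (auto simp: sm_high)

lemma sm_top: "coeff (sm p r) (degree p + degree r) = lead_coeff p * (\<sigma>^^degree p) (lead_coeff r)"
proof -
  have "coeff (sm p r) (degree p + degree r) =
     (\<Sum>i\<le>degree p. \<Sum>j\<le>degree r. if i = degree p then (if j = degree r then
        lead_coeff p * (\<sigma>^^degree p) (lead_coeff r) else 0) else 0)"
    unfolding sm_coeff by (intro sum.cong refl) auto
  also have "\<dots> = (\<Sum>i\<le>degree p. if i = degree p then
        lead_coeff p * (\<sigma>^^degree p) (lead_coeff r) else 0)"
    by (intro sum.cong refl) (cases "i = degree p"; simp)
  also have "\<dots> = lead_coeff p * (\<sigma>^^degree p) (lead_coeff r)" by simp
  finally show ?thesis .
qed

lemma sm_degree: "p \<noteq> 0 \<Longrightarrow> r \<noteq> 0 \<Longrightarrow> degree (sm p r) = degree p + degree r"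
  by (intro antisym sm_degree_le le_degree) (simp add: sm_top)

lemma sm_eq0: "sm p r = 0 \<longleftrightarrow> p = 0 \<or> r = 0"
proof
  assume h: "sm p r = 0"
  show "p = 0 \<or> r = 0"
  proof (rule ccontr)
    assume "\<not> (p = 0 \<or> r = 0)"
    then have "coeff (sm p r) (degree p + degree r) \<noteq> 0" by (simp add: sm_top)
    with h show False by simp
  qed
qed auto

lemma sm_div:
  assumes d0: "d \<noteq> 0"
  shows "\<exists>q r. g = sm q d + r \<and> (r = 0 \<or> degree r < degree d)"
proof (induction "degree g" arbitrary: g rule: less_induct)
  case less
  show ?case
  proof (cases "g = 0 \<or> degree g < degree d")
    case True
    then show ?thesis by (intro exI[of _ 0] exI[of _ g]) auto
  next
    case False
    then have g0: "g \<noteq> 0" and dle: "degree d \<le> degree g" by auto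
    define k where "k = degree g - degree d"
    define c where "c = lead_coeff g / (\<sigma>^^k) (lead_coeff d)"
    have lcd: "(\<sigma>^^k) (lead_coeff d) \<noteq> 0" using d0 by simp
    have c0: "c \<noteq> 0" using g0 lcd by (simp add: c_def)
    define g' where "g' = g - sm (monom c k) d"
    have dm: "degree (monom c k) = k" using c0 by (simp add: degree_monom_eq)
    have deg: "degree (sm (monom c k) d) = degree g"
      using sm_degree[of "monom c k" d] c0 d0 dm dle by (simp add: k_def)
    have top: "coeff (sm (monom c k) d) (degree g) = lead_coeff g"
      using sm_top[of "monom c k" d] dm dle lcd by (simp add: k_def c_def)
    have dg': "degree g' \<le> degree g" unfolding g'_def using deg by (intro degree_diff_le) auto
    have cg': "coeff g' (degree g) = 0" unfolding g'_def using top by simp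
    have "g' = 0 \<or> degree g' < degree g"
    proof (rule ccontr)
      assume "\<not> (g' = 0 \<or> degree g' < degree g)"
      then have "g' \<noteq> 0" "degree g' = degree g" using dg' by auto
      then show False using cg' by (metis leading_coeff_0_iff)
    qed
    then show ?thesis
    proof
      assume "g' = 0"
      then have "g = sm (monom c k) d + 0" by (simp add: g'_def)
      then show ?thesis by blast
    next
      assume "degree g' < degree g"
      from less[OF this] obtain q r where qr: "g' = sm q d + r" "r = 0 \<or> degree r < degree d" by blast
      have "g = sm (q + monom c k) d + r"
        using qr(1) by (simp add: g'_def sm_add_left algebra_simps)
      with qr(2) show ?thesis by blast
    qed
  qed
qed

lemma rem_unique:
  assumes f0: "f \<noteq> 0" and e: "sm q1 f + r1 = sm q2 f + r2"
    and d1: "degree r1 < degree f" and d2: "degree r2 < degree f"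
  shows "r1 = r2"
proof (cases "q1 = q2")
  case True with e show ?thesis by simp
next
  case False
  have "sm (q1 - q2) f = r2 - r1" using e by (simp add: sm_diff_left algebra_simps)
  moreover have "degree (sm (q1 - q2) f) \<ge> degree f" using False f0 by (simp add: sm_degree)
  moreover have "degree (r2 - r1) < degree f" using d1 d2 by (intro degree_diff_less)
  ultimately show ?thesis by simp
qed

lemma rmod_char:
  assumes "degree f > 0" "degree r < degree f" "g = sm q f + r"
  shows "skew_rmod \<sigma> g f = r"
  unfolding skew_rmod_def
proof (rule the_equality)
  show "degree r < degree f \<and> (\<exists>q. g = sm q f + r)" using assms by blast
next
  fix r' assume "degree r' < degree f \<and> (\<exists>q. g = sm q f + r')"
  then obtain q' where "degree r' < degree f" "g = sm q' f + r'" by blast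
  then show "r' = r" using assms rem_unique[of f q' r' q r] by fastforce
qed

lemma rmod_ex:
  assumes "degree f > 0"
  shows "degree (skew_rmod \<sigma> g f) < degree f \<and> (\<exists>q. g = sm q f + skew_rmod \<sigma> g f)"
proof -
  have f0: "f \<noteq> 0" using assms by auto
  obtain q r where qr: "g = sm q f + r" "r = 0 \<or> degree r < degree f" using sm_div[OF f0] by blast
  have dr: "degree r < degree f" using qr(2) assms by auto
  have "skew_rmod \<sigma> g f = r" by (rule rmod_char[OF assms dr qr(1)])
  then show ?thesis using qr(1) dr by blast
qed

lemma sm_const_left: "sm [:c:] x = smult c x"
proof (rule poly_eqI)
  fix k
  have "coeff (sm [:c:] x) k = (\<Sum>j\<le>degree x. if j = k then c * coeff x j else 0)"
    by (simp add: sm_coeff)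
  also have "\<dots> = c * coeff x k" by (auto simp: coeff_eq_0)
  finally show "coeff (sm [:c:] x) k = coeff (smult c x) k" by simp
qed

lemma sm_one_right: "sm x 1 = x"
proof -
  have "sm (\<Sum>i\<le>degree x. monom (coeff x i) i) (monom 1 0) = (\<Sum>i\<le>degree x. monom (coeff x i) i)"
    by (simp add: sm_sum_left sm_monom[of _ _ 1 0, simplified])
  then show ?thesis by (simp add: poly_as_sum_of_monoms)
qed

lemma sm_one_left: "sm 1 x = x"
  using sm_const_left[of 1 x] by (simp add: one_pCons)

lemma sm_const_const: "sm [:c:] [:d:] = [:c * d:]"
  by (simp add: sm_const_left)

lemma sm_const_right_deg: "degree (sm x [:c:]) \<le> degree x"
  using sm_degree_le[of x "[:c:]"] by simp

lemma min_deg: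
  assumes "g \<in> S" "g \<noteq> 0"
  shows "\<exists>e\<in>S. e \<noteq> 0 \<and> (\<forall>h\<in>S. h \<noteq> 0 \<longrightarrow> degree e \<le> degree (h::'k poly))"
  using ex_has_least_nat[of "\<lambda>h. h \<in> S \<and> h \<noteq> 0" g degree] assms by blast

lemma nozd:
  assumes fin: "finite (UNIV :: 'k set)" and fpos: "degree f > 0"
    and irr: "skew_irreducible \<sigma> f"
    and x0: "x \<noteq> 0" and dx: "degree x < degree f"
    and y0: "y \<noteq> 0" and dy: "degree y < degree f"
  shows "skew_rmod \<sigma> (sm x y) f \<noteq> 0"
proof
  assume rz: "skew_rmod \<sigma> (sm x y) f = 0"
  define m where "m = degree f"
  have f0: "f \<noteq> 0" using fpos by auto
  obtain qx where qx: "sm x y = sm qx f" using rmod_ex[OF fpos, of "sm x y"] rz by auto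
  \<comment> \<open>Step B: 1 lies in R y + R f\<close>
  define B where "B = {g. \<exists>a b. g = sm a y + sm b f}"
  have Bmul: "sm u g \<in> B" if "g \<in> B" for u g
  proof -
    from that obtain a b where "g = sm a y + sm b f" unfolding B_def by blast
    then have "sm u g = sm (sm u a) y + sm (sm u b) f" by (simp add: sm_add_right sm_assoc)
    then show ?thesis unfolding B_def by blast
  qed
  have Bdiff: "g - h \<in> B" if "g \<in> B" "h \<in> B" for g h
  proof -
    from that obtain a b a' b' where "g = sm a y + sm b f" "h = sm a' y + sm b' f" unfolding B_def by blast
    then have "g - h = sm (a - a') y + sm (b - b') f" by (simp add: sm_diff_left algebra_simps)
    then show ?thesis unfolding B_def by blast
  qed
  have yB: "y \<in> B" unfolding B_def by (rule CollectI, rule exI[of _ 1], rule exI[of _ 0]) (simp add: sm_one_left)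
  have fB: "f \<in> B" unfolding B_def by (rule CollectI, rule exI[of _ 0], rule exI[of _ 1]) (simp add: sm_one_left)
  obtain e where eB: "e \<in> B" and e0: "e \<noteq> 0" and emin: "\<And>h. h \<in> B \<Longrightarrow> h \<noteq> 0 \<Longrightarrow> degree e \<le> degree h"
    using min_deg[OF yB y0] by blast
  have edvd: "\<exists>u. g = sm u e" if "g \<in> B" for g
  proof -
    obtain u r where ur: "g = sm u e + r" "r = 0 \<or> degree r < degree e" using sm_div[OF e0] by blast
    have "r = g - sm u e" using ur(1) by simp
    then have "r \<in> B" using Bdiff[OF that Bmul[OF eB]] by simp
    then have "r = 0" using ur(2) emin by fastforce
    then show ?thesis using ur(1) by auto
  qed
  obtain u where fu: "f = sm u e" using edvd[OF fB] by blast
  have dey: "degree e \<le> degree y" using emin[OF yB y0] .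
  have de0: "degree e = 0"
  proof (rule ccontr)
    assume "degree e \<noteq> 0"
    have u0: "u \<noteq> 0" using fu f0 by auto
    have "degree f = degree u + degree e" using fu sm_degree[OF u0 e0] by simp
    then have "degree u < degree f" "degree e < degree f" using \<open>degree e \<noteq> 0\<close> dey dy by auto
    then show False using irr fu unfolding skew_irreducible_def by blast
  qed
  then obtain c where ec: "e = [:c:]" using degree0_coeffs by blast
  have c0: "c \<noteq> 0" using e0 ec by simp
  have "sm [:1/c:] e = 1" using c0 by (simp add: ec sm_const_left one_pCons)
  then have "1 \<in> B" using Bmul[OF eB, of "[:1/c:]"] by simp
  then obtain a b where ab: "1 = sm a y + sm b f" unfolding B_def by blast
  define A where "A = {g. \<exists>q. sm g y = sm q f}"
  have xA: "x \<in> A" using qx unfolding A_def by blast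
  obtain g0 where g0A: "g0 \<in> A" and g00: "g0 \<noteq> 0" and gmin: "\<And>h. h \<in> A \<Longrightarrow> h \<noteq> 0 \<Longrightarrow> degree g0 \<le> degree h"
    using min_deg[OF xA x0] by blast
  define d0 where "d0 = degree g0"
  have d0m: "d0 < m" using gmin[OF xA x0] dx by (simp add: d0_def m_def)
  obtain q0 where q0: "sm g0 y = sm q0 f" using g0A unfolding A_def by blast
  define P where "P d = {p::'k poly. p = 0 \<or> degree p < d}" for d
  define \<phi> where "\<phi> r = skew_rmod \<sigma> (sm r y) f" for r
  have surj: "P m \<subseteq> \<phi> ` P d0"
  proof
    fix h assume hP: "h \<in> P m"
    have dh: "degree h < degree f" using hP fpos by (auto simp: P_def m_def)
    have h1: "h = sm (sm h a) y + sm (sm h b) f"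
      using arg_cong[OF ab, of "sm h"] by (simp add: sm_one_right sm_add_right sm_assoc)
    obtain s r where sr: "sm h a = sm s g0 + r" "r = 0 \<or> degree r < d0"
      using sm_div[OF g00] unfolding d0_def by blast
    obtain q' where q': "sm r y = sm q' f + \<phi> r" and dphi: "degree (\<phi> r) < degree f"
      using rmod_ex[OF fpos, of "sm r y"] unfolding \<phi>_def by blast
    have e1: "sm (sm s g0) y = sm (sm s q0) f" by (simp add: sm_assoc q0)
    have "h = sm (sm s q0 + q' + sm h b) f + \<phi> r"
      using h1 sr(1) q' e1 by (simp add: sm_add_left algebra_simps)
    then have "sm 0 f + h = sm (sm s q0 + q' + sm h b) f + \<phi> r" by simp
    then have "h = \<phi> r" using rem_unique[OF f0 _ dh dphi] by blast
    moreover have "r \<in> P d0" using sr(2) by (auto simp: P_def)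
    ultimately show "h \<in> \<phi> ` P d0" by blast
  qed
  have sub: "P d0 \<subset> P m"
  proof
    show "P d0 \<subseteq> P m" using d0m by (auto simp: P_def)
    have "monom 1 d0 \<in> P m" "monom 1 d0 \<notin> P d0" using d0m by (auto simp: P_def degree_monom_eq)
    then show "P d0 \<noteq> P m" by blast
  qed
  have finP: "finite (P m)"
  proof -
    have "P m \<subseteq> (\<lambda>c. \<Sum>i\<le>m. monom (c i) i) ` (PiE {..m} (\<lambda>_. UNIV))"
    proof
      fix p assume "p \<in> P m"
      then have "degree p \<le> m" by (auto simp: P_def)
      then have "p = (\<Sum>i\<le>m. monom (restrict (coeff p) {..m} i) i)"
        by (simp add: poly_as_sum_of_monoms')
      moreover have "restrict (coeff p) {..m} \<in> PiE {..m} (\<lambda>_. UNIV)" by simp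
      ultimately show "p \<in> (\<lambda>c. \<Sum>i\<le>m. monom (c i) i) ` (PiE {..m} (\<lambda>_. UNIV))" by blast
    qed
    moreover have "finite (PiE {..m} (\<lambda>_. UNIV :: 'k set))" using fin by (intro finite_PiE) auto
    ultimately show ?thesis by (meson finite_imageI finite_subset)
  qed
  have "card (P m) \<le> card (\<phi> ` P d0)" using surj finP
    by (meson card_mono finite_imageI finite_subset sub psubset_imp_subset)
  also have "\<dots> \<le> card (P d0)" by (rule card_image_le) (use finP sub in \<open>meson finite_subset psubset_imp_subset\<close>)
  also have "\<dots> < card (P m)" by (rule psubset_card_mono[OF finP sub])
  finally show False by simp
qed

end

locale sloop = skewf \<sigma> for \<sigma> :: "'k::{field,finite} \<Rightarrow> 'k" +
  fixes f :: "'k poly"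
  assumes fdeg: "degree f \<ge> 2" and irr: "skew_irreducible \<sigma> f"
    and nuc: "loop_nucleus (Lf f) (Sf_mult \<sigma> f) = {[:c:] | c. c \<noteq> 0}"
begin

abbreviation "L \<equiv> Lf f"
abbreviation "mul \<equiv> Sf_mult \<sigma> f"

lemma fpos: "degree f > 0" using fdeg by simp

lemma L_iff: "p \<in> L \<longleftrightarrow> degree p < degree f \<and> p \<noteq> 0" by (simp add: Lf_def)

lemma mul_closed: "x \<in> L \<Longrightarrow> y \<in> L \<Longrightarrow> mul x y \<in> L"
  unfolding L_iff Sf_mult_def using rmod_ex[OF fpos, of "sm x y"] nozd[OF _ fpos irr, of x y] by auto

lemma mul_const_left: "x \<in> L \<Longrightarrow> mul [:c:] x = smult c x"
  unfolding Sf_mult_def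
  by (rule rmod_char[OF fpos, of _ _ 0]) (auto simp: L_iff sm_const_left intro: le_less_trans[OF degree_smult_le])

lemma mul_const_right: "x \<in> L \<Longrightarrow> mul x [:c:] = sm x [:c:]"
  unfolding Sf_mult_def
  by (rule rmod_char[OF fpos, of _ _ 0]) (auto simp: L_iff intro: le_less_trans[OF sm_const_right_deg])

lemma const_L: "c \<noteq> 0 \<Longrightarrow> [:c:] \<in> L" using fpos by (simp add: L_iff)
lemma one_L: "1 \<in> L" using const_L[of 1] by (simp add: one_pCons)

lemma mul_one_right: "x \<in> L \<Longrightarrow> mul x 1 = x"
  using mul_const_right[of x 1] by (simp add: one_pCons[symmetric] sm_one_right)

lemma smult_L: "x \<in> L \<Longrightarrow> c \<noteq> 0 \<Longrightarrow> smult c x \<in> L" by (simp add: L_iff)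

lemma smr_L: "x \<in> L \<Longrightarrow> c \<noteq> 0 \<Longrightarrow> sm x [:c:] \<in> L"
  using sm_const_right_deg[of x c] by (auto simp: L_iff sm_eq0)

lemma Lc_Bij: "c \<noteq> 0 \<Longrightarrow> lmult_map L mul [:c:] \<in> Bij L"
  unfolding Bij_def lmult_map_def
proof (intro IntI CollectI)
  assume c0: "c \<noteq> 0"
  show "(\<lambda>y\<in>L. mul [:c:] y) \<in> extensional L" by simp
  show "bij_betw (\<lambda>y\<in>L. mul [:c:] y) L L"
    by (rule bij_betw_byWitness[where f'="\<lambda>y. smult (1/c) y"])
       (use c0 in \<open>auto simp: mul_const_left smult_L\<close>)
qed

lemma Rc_Bij: "c \<noteq> 0 \<Longrightarrow> rmult_map L mul [:c:] \<in> Bij L"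
  unfolding Bij_def rmult_map_def
proof (intro IntI CollectI)
  assume c0: "c \<noteq> 0"
  show "(\<lambda>y\<in>L. mul y [:c:]) \<in> extensional L" by simp
  have inv1: "sm (sm y [:c:]) [:1/c:] = y" for y
    using c0 by (simp add: sm_assoc sm_const_const sm_one_right one_pCons[symmetric])
  have inv2: "sm (sm y [:1/c:]) [:c:] = y" for y
    using c0 by (simp add: sm_assoc sm_const_const sm_one_right one_pCons[symmetric])
  show "bij_betw (\<lambda>y\<in>L. mul y [:c:]) L L"
    by (rule bij_betw_byWitness[where f'="\<lambda>y. sm y [:1/c:]"])
       (use c0 in \<open>auto simp: mul_const_right smr_L inv1 inv2\<close>)
qed

lemma Lc_inv: assumes c0: "c \<noteq> 0" and y: "y \<in> L"
  shows "(inv\<^bsub>BijGroup L\<^esub> (lmult_map L mul [:c:])) y = smult (1/c) y"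
proof -
  have bij: "bij_betw (lmult_map L mul [:c:]) L L" using Lc_Bij[OF c0] by (simp add: Bij_def)
  have "inv_into L (lmult_map L mul [:c:]) y = smult (1/c) y"
    by (rule inv_into_f_eq[OF bij_betw_imp_inj_on[OF bij]])
       (use c0 y in \<open>auto simp: lmult_map_def smult_L mul_const_left\<close>)
  then show ?thesis using y by (simp add: inv_BijGroup[OF Lc_Bij[OF c0]])
qed

abbreviation "T c \<equiv> middle_inner L mul [:c:]"

lemma T_Bij: "c \<noteq> 0 \<Longrightarrow> T c \<in> Bij L"
proof -
  assume c0: "c \<noteq> 0"
  interpret G: group "BijGroup L" by (rule group_BijGroup)
  have "lmult_map L mul [:c:] \<in> carrier (BijGroup L)" "rmult_map L mul [:c:] \<in> carrier (BijGroup L)"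
    using Lc_Bij[OF c0] Rc_Bij[OF c0] by (auto simp: BijGroup_def)
  then have "T c \<in> carrier (BijGroup L)" unfolding middle_inner_def by auto
  then show ?thesis by (simp add: BijGroup_def)
qed

lemma BG_mult: "x \<in> Bij S \<Longrightarrow> y \<in> Bij S \<Longrightarrow> x \<otimes>\<^bsub>BijGroup S\<^esub> y = compose S x y"
  by (simp add: BijGroup_def)

lemma T_apply: assumes c0: "c \<noteq> 0" and z: "z \<in> L"
  shows "T c z = smult (1/c) (sm z [:c:])"
proof -
  have inv: "inv\<^bsub>BijGroup L\<^esub> (lmult_map L mul [:c:]) \<in> Bij L"
    using Lc_Bij[OF c0] group.inv_closed[OF group_BijGroup] by (auto simp: BijGroup_def)
  have "T c = compose L (inv\<^bsub>BijGroup L\<^esub> (lmult_map L mul [:c:])) (rmult_map L mul [:c:])"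
    unfolding middle_inner_def by (rule BG_mult[OF inv Rc_Bij[OF c0]])
  then have "T c z = (inv\<^bsub>BijGroup L\<^esub> (lmult_map L mul [:c:])) (rmult_map L mul [:c:] z)"
    using z by (simp add: compose_def)
  also have "\<dots> = smult (1/c) (sm z [:c:])"
    using z c0 by (simp add: rmult_map_def mul_const_right Lc_inv smr_L)
  finally show ?thesis .
qed

lemma T_apply2: assumes c0: "c \<noteq> 0" and z: "z \<in> L"
  shows "T c z = mul [:1/c:] (mul z [:c:])"
  using assms by (simp add: T_apply mul_const_right mul_const_left smr_L)

lemma T_one: "c \<noteq> 0 \<Longrightarrow> T c 1 = 1"
  using one_L by (simp add: T_apply sm_const_left one_pCons)

lemma T_Mlt: "c \<noteq> 0 \<Longrightarrow> T c \<in> Mlt L mul"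
  unfolding Mlt_def middle_inner_def
  by (intro generate.eng generate.inv generate.incl) (auto intro: const_L)

lemma T_Inn: "c \<noteq> 0 \<Longrightarrow> T c \<in> Inn L mul 1"
  by (simp add: Inn_def T_Mlt T_one)

lemma nuc_const: "c \<noteq> 0 \<Longrightarrow> y \<in> L \<Longrightarrow> z \<in> L \<Longrightarrow>
   mul (mul [:c:] y) z = mul [:c:] (mul y z) \<and>
   mul (mul y [:c:]) z = mul y (mul [:c:] z) \<and>
   mul (mul y z) [:c:] = mul y (mul z [:c:])"
proof -
  assume "c \<noteq> 0" "y \<in> L" "z \<in> L"
  moreover have "[:c:] \<in> loop_nucleus L mul" using \<open>c \<noteq> 0\<close> nuc by auto
  ultimately show ?thesis unfolding loop_nucleus_def by blast
qed

lemma T_hom: assumes c0: "c \<noteq> 0" and x: "x \<in> L" and y: "y \<in> L"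
  shows "T c (mul x y) = mul (T c x) (T c y)"
proof -
  define C where "C = [:c:]"
  define D where "D = [:1/c:]"
  have d0: "1/c \<noteq> 0" using c0 by simp
  have CL: "C \<in> L" and DL: "D \<in> L" using const_L c0 d0 by (auto simp: C_def D_def)
  define u where "u = mul x C"
  define w where "w = mul y C"
  define v where "v = mul D w"
  have uL: "u \<in> L" and wL: "w \<in> L" and vL: "v \<in> L"
    using mul_closed x y CL DL by (auto simp: u_def w_def v_def)
  have CD: "mul C D = 1" using DL c0 by (simp add: C_def D_def mul_const_left one_pCons)
  have uD: "mul u D = x"
    using nuc_const[OF d0 x CL] CD mul_one_right[OF x] by (simp add: u_def D_def)
  have "mul (T c x) (T c y) = mul (mul D u) v"
    using T_apply2[OF c0 x] T_apply2[OF c0 y] by (simp add: u_def v_def w_def C_def D_def)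
  also have "\<dots> = mul D (mul u v)" using nuc_const[OF d0 uL vL] by (simp add: D_def)
  also have "mul u v = mul (mul u D) w" using nuc_const[OF d0 uL wL] by (simp add: D_def v_def)
  also have "\<dots> = mul x w" by (simp add: uD)
  also have "\<dots> = mul (mul x y) C" using nuc_const[OF c0 x y] by (simp add: C_def w_def)
  also have "mul D (mul (mul x y) C) = T c (mul x y)"
    using T_apply2[OF c0 mul_closed[OF x y]] by (simp add: C_def D_def)
  finally show ?thesis by simp
qed

lemma T_auto: "c \<noteq> 0 \<Longrightarrow> loop_automorphism L mul (T c)"
  unfolding loop_automorphism_def using T_Bij[of c] T_hom[of c] by (auto simp: Bij_def)

lemma t_L: "monom 1 1 \<in> L" using fdeg by (simp add: L_iff degree_monom_eq)

lemma T_t: "c \<noteq> 0 \<Longrightarrow> T c (monom 1 1) = monom (\<sigma> c / c) 1"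
proof -
  assume c0: "c \<noteq> 0"
  have "T c (monom 1 1) = smult (1/c) (sm (monom 1 1) [:c:])" by (rule T_apply[OF c0 t_L])
  also have "sm (monom 1 1) [:c:] = monom (\<sigma> c) 1"
    using sm_monom[of 1 1 c 0] by (simp add: monom_0)
  finally show ?thesis by (simp add: smult_monom)
qed

end

lemma card_fibers:
  assumes "finite A" "\<And>a. a \<in> A \<Longrightarrow> card {b\<in>A. g b = g a} \<le> k"
  shows "card A \<le> card (g ` A) * k"
proof -
  have "A = (\<Union>y\<in>g ` A. {b\<in>A. g b = y})" by auto
  then have "card A \<le> (\<Sum>y\<in>g ` A. card {b\<in>A. g b = y})"
    by (metis card_UN_le assms(1) finite_imageI)
  also have "\<dots> \<le> (\<Sum>y\<in>g ` A. k)" by (intro sum_mono) (use assms(2) in auto)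
  finally show ?thesis by simp
qed

lemma finite_Lf:
  assumes "finite (UNIV :: 'k::field set)"
  shows "finite (Lf (f :: 'k poly))"
proof -
  let ?m = "degree f"
  have "Lf f \<subseteq> (\<lambda>c. \<Sum>i\<le>?m. monom (c i) i) ` (PiE {..?m} (\<lambda>_. UNIV))"
  proof
    fix p assume "p \<in> Lf f"
    then have "degree p \<le> ?m" by (auto simp: Lf_def)
    then have "p = (\<Sum>i\<le>?m. monom (restrict (coeff p) {..?m} i) i)"
      by (simp add: poly_as_sum_of_monoms')
    moreover have "restrict (coeff p) {..?m} \<in> PiE {..?m} (\<lambda>_. UNIV)" by simp
    ultimately show "p \<in> (\<lambda>c. \<Sum>i\<le>?m. monom (c i) i) ` (PiE {..?m} (\<lambda>_. UNIV))" by blast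
  qed
  moreover have "finite (PiE {..?m} (\<lambda>_. UNIV :: 'k set))" using assms by (intro finite_PiE) auto
  ultimately show ?thesis by (meson finite_imageI finite_subset)
qed

theorem mainTheorem4:
  fixes \<sigma> :: "'k::{field,finite} \<Rightarrow> 'k" and q n m :: nat and f :: "'k poly"
  assumes card_K: "card (UNIV :: 'k set) = q ^ n"
    and n_gt: "n > 1"
    and sigma_bij: "bij \<sigma>"
    and sigma_add: "\<And>x y. \<sigma> (x + y) = \<sigma> x + \<sigma> y"
    and sigma_mult: "\<And>x y. \<sigma> (x * y) = \<sigma> x * \<sigma> y"
    and sigma_order: "\<sigma> ^^ n = id" "\<And>k. 0 < k \<Longrightarrow> k < n \<Longrightarrow> \<sigma> ^^ k \<noteq> id"
    and fixed_field: "card {x. \<sigma> x = x} = q"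
    and monic: "lead_coeff f = 1"
    and deg: "degree f = m" "m \<ge> 2"
    and irred: "skew_irreducible \<sigma> f"
    and not_inv: "\<not> right_invariant \<sigma> f"
    and nm: "n \<ge> m - 1"
    and nucleus: "loop_nucleus (Lf f) (Sf_mult \<sigma> f) = {[:c:] | c. c \<noteq> 0}"
  shows "real (card {middle_inner (Lf f) (Sf_mult \<sigma> f) c | c.
             c \<in> Lf f \<and>
             middle_inner (Lf f) (Sf_mult \<sigma> f) c \<in> Inn (Lf f) (Sf_mult \<sigma> f) 1 \<and>
             loop_automorphism (Lf f) (Sf_mult \<sigma> f) (middle_inner (Lf f) (Sf_mult \<sigma> f) c)})
         \<ge> (real q ^ n - 1) / (real q - 1)"
proof -
  interpret sloop \<sigma> f
    by unfold_locales (use sigma_add sigma_mult sigma_bij deg irred nucleus in auto)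
  define S where "S = {middle_inner (Lf f) (Sf_mult \<sigma> f) c | c.
             c \<in> Lf f \<and>
             middle_inner (Lf f) (Sf_mult \<sigma> f) c \<in> Inn (Lf f) (Sf_mult \<sigma> f) 1 \<and>
             loop_automorphism (Lf f) (Sf_mult \<sigma> f) (middle_inner (Lf f) (Sf_mult \<sigma> f) c)}"
  define A where "A = (UNIV :: 'k set) - {0}"
  define \<Phi> where "\<Phi> c = T c" for c
  have finK: "finite (UNIV :: 'k set)" by simp
  have sub: "\<Phi> ` A \<subseteq> S"
  proof
    fix g assume "g \<in> \<Phi> ` A"
    then obtain c where c0: "c \<noteq> 0" and g: "g = T c" by (auto simp: A_def \<Phi>_def)
    show "g \<in> S" unfolding S_def g using c0 const_L T_Inn T_auto by blast
  qed
  have finS: "finite S"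
  proof -
    have "S \<subseteq> middle_inner L mul ` L" unfolding S_def by blast
    then show ?thesis using finite_Lf[OF finK, of f] by (meson finite_imageI finite_subset)
  qed
  define F where "F = {u::'k. \<sigma> u = u \<and> u \<noteq> 0}"
  have s1: "\<sigma> 1 = 1" using pw_1[of 1] by simp
  have s0': "\<sigma> 0 = 0" using pw_0[of 1] by simp
  have cardF: "card F = q - 1"
  proof -
    have "F = {x. \<sigma> x = x} - {0}" by (auto simp: F_def)
    then show ?thesis using fixed_field s0' by (simp add: card_Diff_singleton)
  qed
  have q2: "q \<ge> 2"
  proof -
    have "{0, 1} \<subseteq> {x::'k. \<sigma> x = x}" using s0' s1 by auto
    then have "card {0, 1::'k} \<le> q" using fixed_field by (metis card_mono finite)
    then show ?thesis by simp
  qed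
  have fib: "card {d\<in>A. \<Phi> d = \<Phi> c} \<le> q - 1" if cA: "c \<in> A" for c
  proof -
    have c0: "c \<noteq> 0" using cA by (simp add: A_def)
    have "{d\<in>A. \<Phi> d = \<Phi> c} \<subseteq> (\<lambda>u. c * u) ` F"
    proof
      fix d assume "d \<in> {d\<in>A. \<Phi> d = \<Phi> c}"
      then have d0: "d \<noteq> 0" and e: "T d = T c" by (auto simp: A_def \<Phi>_def)
      have "monom (\<sigma> d / d) 1 = monom (\<sigma> c / c) 1" using e T_t[OF d0] T_t[OF c0] by metis
      then have e2: "\<sigma> d / d = \<sigma> c / c" by (simp add: monom_eq_iff')
      have sc0: "\<sigma> c \<noteq> 0" using pw_eq0[of 1 c] c0 by simp
      have "\<sigma> (d / c) * \<sigma> c = \<sigma> d" using sigma_mult[of "d/c" c] c0 by simp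
      then have "\<sigma> (d / c) = \<sigma> d / \<sigma> c" using sc0 by (simp add: field_simps)
      also have "\<dots> = d / c" using e2 c0 d0 sc0 by (simp add: field_simps)
      finally have "d / c \<in> F" using c0 d0 by (simp add: F_def)
      moreover have "d = c * (d / c)" using c0 by simp
      ultimately show "d \<in> (\<lambda>u. c * u) ` F" by blast
    qed
    then have "card {d\<in>A. \<Phi> d = \<Phi> c} \<le> card ((\<lambda>u. c * u) ` F)" by (intro card_mono) auto
    also have "\<dots> \<le> card F" by (rule card_image_le) simp
    finally show ?thesis using cardF by simp
  qed
  have c1: "card A \<le> card (\<Phi> ` A) * (q - 1)" by (rule card_fibers) (use fib in auto)
  have c2: "card A = q ^ n - 1" using card_K by (simp add: A_def card_Diff_singleton)
  have c3: "card (\<Phi> ` A) * (q - 1) \<le> card S * (q - 1)" by (intro mult_le_mono1 card_mono[OF finS sub])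
  have h: "q ^ n - 1 \<le> card S * (q - 1)" using c1 c2 c3 by linarith
  have qn: "q ^ n \<ge> 1" using q2 by simp
  have "real (q ^ n - 1) \<le> real (card S * (q - 1))" using h by (simp only: of_nat_le_iff)
  then have "real q ^ n - 1 \<le> real (card S) * (real q - 1)" using qn q2 by (simp add: of_nat_diff)
  then have "(real q ^ n - 1) / (real q - 1) \<le> real (card S)" using q2
    by (simp add: divide_le_eq)
  then show ?thesis unfolding S_def .
qed

end
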